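(* Let $c>0$ and consider the vector field, on the space of variables $(\rho,v,p,e,dt,dx)$ with $|v|<c$ (where $dt,dx$ are treated as independent coordinates), \[ X=-\frac{\rho v^{2}e}{c^{2}-v^{2}}\partial_{\rho}-pv\,\partial_{v}-p^{2}\partial_{p}+\frac{c^{2}p^{2}-e^{2}v^{2}}{c^{2}-v^{2}}\partial_{e}+\frac{(c^{2}p+ev^{2})\,dt-v(e+p)\,dx}{c^{2}-v^{2}}\,\partial_{dt}, \] which is the infinitesimal generator of the one-parameter group of reciprocal transformations $\rho^{*}=\dfrac{\rho\sqrt{(\epsilon p+1)^{2}-v^{2}/c^{2}}}{(\epsilon(p+Sv^{2})+1)\sqrt{1-v^{2}/c^{2}}}$, $v^{*}=\dfrac{v}{\epsilon p+1}$, $p^{*}=\dfrac{p}{\epsilon p+1}$, $e^{*}=\dfrac{S(c^{2}(\epsilon p+1)^{2}-v^{2})}{(\epsilon(p+Sv^{2})+1)(\epsilon p+1)}-\dfrac{p}{\epsilon p+1}$, $dt^{*}=dt-\epsilon(Sv\,dx-(p+Sv^{2})dt)$, $dx^{*}=dx$, where $S=(e+p)/(c^{2}-v^{2})$. Then the functions \[ J_{1}=\frac{(cp-ve)(c-v)}{(cp+ve)(c+v)},\qquad J_{2}=\frac{\rho p}{cp+ev}\sqrt{\frac{c-v}{c+v}}, \] \[ J_{3}=\frac{v(cp+ev)}{p(c-v)(pc^{2}+ev^{2})}\left((c^{2}p+ev^{2})\,dt-v(e+p)\,dx\right) \] are invariants of this group, i.e. $XJ_{1}=XJ_{2}=XJ_{3}=0$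 (on the domain where they are defined).
   Context: $c$ is the speed of light, $\rho,v,p,e$ are density, velocity, pressure and energy density of a 1+1-dimensional relativistic gas. A function $J$ is an invariant of a one-parameter group of transformations with infinitesimal generator $X$ if and only if $XJ=0$. *)

theory Defs
  imports "HOL-Analysis.Analysis"
begin

type_synonym field6 = "real \<Rightarrow> real \<Rightarrow> real \<Rightarrow> real \<Rightarrow> real \<Rightarrow> real \<Rightarrow> real"

definition Xgen :: "real \<Rightarrow> field6 \<Rightarrow> field6" where
  "Xgen c J \<rho> v p e dt dx =
      (- (\<rho> * v^2 * e) / (c^2 - v^2)) * deriv (\<lambda>s. J s v p e dt dx) \<rho>
    + (- (p * v)) * deriv (\<lambda>s. J \<rho> s p e dt dx) v
    + (- (p^2)) * deriv (\<lambda>s. J \<rho> v s e dt dx) p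
    + ((c^2 * p^2 - e^2 * v^2) / (c^2 - v^2)) * deriv (\<lambda>s. J \<rho> v p s dt dx) e
    + (((c^2 * p + e * v^2) * dt - v * (e + p) * dx) / (c^2 - v^2))
        * deriv (\<lambda>s. J \<rho> v p e s dx) dt"

definition J1 :: "real \<Rightarrow> field6" where
  "J1 c \<rho> v p e dt dx = ((c * p - v * e) * (c - v)) / ((c * p + v * e) * (c + v))"

definition J2 :: "real \<Rightarrow> field6" where
  "J2 c \<rho> v p e dt dx = (\<rho> * p) / (c * p + e * v) * sqrt ((c - v) / (c + v))"

definition J3 :: "real \<Rightarrow> field6" where
  "J3 c \<rho> v p e dt dx = (v * (c * p + e * v)) / (p * (c - v) * (p * c^2 + e * v^2))
      * ((c^2 * p + e * v^2) * dt - v * (e + p) * dx)"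

end

theory Submission imports Defs begin
lemma j1:
  fixes c r v p e dt dx :: real
  assumes "c > 0" and "\<bar>v\<bar> < c" and D: "c  *  p + v  *  e \<noteq> 0"
  shows "Xgen c (J1 c) r v p e dt dx = 0"
proof -
  have cv1: "c - v > 0" "c + v > 0" using assms by (auto simp: abs_less_iff)
  have "c^2 - v^2 = (c-v) * (c+v)" by (simp add: power2_eq_square algebra_simps)
  hence cv: "c + v \<noteq> 0" "c - v \<noteq> 0" "c^2 - v^2 \<noteq> 0" using cv1 by auto
  define Dn where "Dn = (c * p+v * e) * (c+v)"
  have Dn: "Dn \<noteq> 0" using D cv by (simp add: Dn_def)
  have a: "deriv (\<lambda>s. J1 c s v p e dt dx) r = 0" unfolding J1_def by simp
  have b: "deriv (\<lambda>s. J1 c r v p e s dx) dt = 0" unfolding J1_def by simp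
  have "((\<lambda>s. J1 c r s p e dt dx) has_real_derivative
     (((-e * (c-v) - (c * p-v * e)) * Dn - (c * p-v * e) * (c-v) * (e * (c+v)+(c * p+v * e)))/Dn^2)) (at v)"
    unfolding J1_def using Dn D cv
    by (auto intro!: derivative_eq_intros simp: Dn_def field_simps power2_eq_square)
  hence dv: "deriv (\<lambda>s. J1 c r s p e dt dx) v = (((-e * (c-v) - (c * p-v * e)) * Dn - (c * p-v * e) * (c-v) * (e * (c+v)+(c * p+v * e)))/Dn^2)"
    by (rule DERIV_imp_deriv)
  have "((\<lambda>s. J1 c r v s e dt dx) has_real_derivative
     ((c * (c-v) * Dn - (c * p-v * e) * (c-v) * (c * (c+v)))/Dn^2)) (at p)"
    unfolding J1_def using Dn D cv
    by (auto intro!: derivative_eq_intros simp: Dn_def field_simps power2_eq_square)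
  hence dp: "deriv (\<lambda>s. J1 c r v s e dt dx) p = ((c * (c-v) * Dn - (c * p-v * e) * (c-v) * (c * (c+v)))/Dn^2)"
    by (rule DERIV_imp_deriv)
  have "((\<lambda>s. J1 c r v p s dt dx) has_real_derivative
     ((-v * (c-v) * Dn - (c * p-v * e) * (c-v) * (v * (c+v)))/Dn^2)) (at e)"
    unfolding J1_def using Dn D cv
    by (auto intro!: derivative_eq_intros simp: Dn_def field_simps power2_eq_square)
  hence de: "deriv (\<lambda>s. J1 c r v p s dt dx) e = ((-v * (c-v) * Dn - (c * p-v * e) * (c-v) * (v * (c+v)))/Dn^2)"
    by (rule DERIV_imp_deriv)
  show ?thesis unfolding Xgen_def a b dv dp de using Dn cv
    by (simp add: field_simps Dn_def) algebra
qed

lemma j2: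
  fixes c r v p e dt dx :: real
  assumes "c > 0" and "\<bar>v\<bar> < c" and D: "c * p + e * v \<noteq> 0"
  shows "Xgen c (J2 c) r v p e dt dx = 0"
proof -
  have cv1: "c - v > 0" "c + v > 0" using assms by (auto simp: abs_less_iff)
  have c2: "c^2 - v^2 = (c-v) * (c+v)" by (simp add: power2_eq_square algebra_simps)
  hence cv: "c + v \<noteq> 0" "c - v \<noteq> 0" "c^2 - v^2 \<noteq> 0" using cv1 by auto
  define S where "S = sqrt ((c - v) / (c + v))"
  define Q where "Q = c * p + e * v"
  have Q: "Q \<noteq> 0" using D by (simp add: Q_def)
  have Spos: "S > 0" using cv1 by (simp add: S_def)
  have fpos: "(c - v) / (c + v) > 0" using cv1 by simp
  have S2: "S * S = (c - v) / (c + v)" using cv1 by (simp add: S_def)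
  have f': "((\<lambda>s. (c - s) / (c + s)) has_real_derivative ((-1 * (c+v) - (c-v) * 1) / (c+v)^2)) (at v)"
    using cv by (auto intro!: derivative_eq_intros simp: power2_eq_square)
  have "((\<lambda>s. sqrt ((c - s) / (c + s))) has_real_derivative
      (inverse (sqrt ((c - v) / (c + v))) / 2 * ((-1 * (c+v) - (c-v) * 1) / (c+v)^2))) (at v)"
    by (rule DERIV_chain2[OF DERIV_real_sqrt[OF fpos] f'])
  moreover have "inverse (sqrt ((c - v) / (c + v))) / 2 * ((-1 * (c+v) - (c-v) * 1) / (c+v)^2)
      = - c * S / ((c - v) * (c + v))"
  proof -
    have "inverse S / 2 * ((-1 * (c+v) - (c-v) * 1) / (c+v)^2) = - c / (S * (c+v)^2)"
      using Spos cv by (simp add: field_simps power2_eq_square)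
    also have "... = - c * S / (S * S * (c+v)^2)" using Spos by (simp add: field_simps)
    also have "S * S * (c+v)^2 = (c - v) * (c + v)" unfolding S2 using cv
      by (simp add: field_simps power2_eq_square)
    finally show ?thesis by (simp add: S_def)
  qed
  ultimately have ds: "((\<lambda>s. sqrt ((c - s) / (c + s))) has_real_derivative (- c * S / ((c - v) * (c + v)))) (at v)"
    by simp
  have a: "deriv (\<lambda>s. J2 c s v p e dt dx) r = p / Q * S"
    unfolding J2_def S_def Q_def using D
    by (intro DERIV_imp_deriv) (auto intro!: derivative_eq_intros)
  have b: "deriv (\<lambda>s. J2 c r v p e s dx) dt = 0" unfolding J2_def by simp
  have "((\<lambda>s. J2 c r s p e dt dx) has_real_derivative
     (r * p * ((- e) / Q^2 * S + 1 / Q * (- c * S / ((c - v) * (c + v)))))) (at v)"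
  proof -
    have h1: "((\<lambda>s. r * p / (c * p + e * s)) has_real_derivative (- r * p * e / Q^2)) (at v)"
      using Q by (auto intro!: derivative_eq_intros simp: Q_def field_simps power2_eq_square)
    have "(\<lambda>s. J2 c r s p e dt dx) = (\<lambda>s. r * p / (c * p + e * s) * sqrt ((c - s) / (c + s)))"
      unfolding J2_def by simp
    moreover have "- r * p * e / Q^2 * sqrt ((c - v) / (c + v)) + (- c * S / ((c - v) * (c + v))) * (r * p / (c * p + e * v))
       = r * p * ((- e) / Q^2 * S + 1 / Q * (- c * S / ((c - v) * (c + v))))"
      unfolding S_def Q_def by (simp add: algebra_simps)
    ultimately show ?thesis using DERIV_mult[OF h1 ds] by simp
  qed
  hence dv: "deriv (\<lambda>s. J2 c r s p e dt dx) v = (r * p * ((- e) / Q^2 * S + 1 / Q * (- c * S / ((c - v) * (c + v)))))"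
    by (rule DERIV_imp_deriv)
  have "((\<lambda>s. J2 c r v s e dt dx) has_real_derivative (r * e * v / Q^2 * S)) (at p)"
    unfolding J2_def using Q cv
    by (auto intro!: derivative_eq_intros simp: Q_def S_def field_simps power2_eq_square)
  hence dp: "deriv (\<lambda>s. J2 c r v s e dt dx) p = (r * e * v / Q^2 * S)"
    by (rule DERIV_imp_deriv)
  have "((\<lambda>s. J2 c r v p s dt dx) has_real_derivative (- r * p * v / Q^2 * S)) (at e)"
    unfolding J2_def using Q cv
    by (auto intro!: derivative_eq_intros simp: Q_def S_def field_simps power2_eq_square)
  hence de: "deriv (\<lambda>s. J2 c r v p s dt dx) e = (- r * p * v / Q^2 * S)"
    by (rule DERIV_imp_deriv)
  define W where "W = c^2 - v^2"
  have W: "W \<noteq> 0" using cv by (simp add: W_def)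
  have Wf: "c^2 - v^2 = W" "(c - v) * (c + v) = W" by (simp_all add: W_def c2)
  have "Xgen c (J2 c) r v p e dt dx = r * p * S * (- (v^2) * e * Q + p * v * e * W + c * p * v * Q - p * e * v * W
      - (c^2 * p^2 - e^2 * v^2) * v) / (Q^2 * W)"
    unfolding Xgen_def a b dv dp de Wf using Q W
    by (simp add: field_simps power2_eq_square)
  also have "... = 0" unfolding Q_def W_def by (simp add: algebra_simps power2_eq_square)
  finally show ?thesis .
qed

lemma j3:
  fixes c r v p e dt dx :: real
  assumes "c > 0" and "\<bar>v\<bar> < c" and P: "p \<noteq> 0" and M: "p * c^2 + e * v^2 \<noteq> 0"
  shows "Xgen c (J3 c) r v p e dt dx = 0"
proof -
  have cv1: "c - v > 0" "c + v > 0" using assms by (auto simp: abs_less_iff)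
  have c2: "c^2 - v^2 = (c-v) * (c+v)" by (simp add: power2_eq_square algebra_simps)
  hence cv: "c + v \<noteq> 0" "c - v \<noteq> 0" "c^2 - v^2 \<noteq> 0" using cv1 by auto
  define Mm where "Mm = p * c^2 + e * v^2"
  define Q where "Q = c * p + e * v"
  define N where "N = v * Q"
  define Dn where "Dn = p * (c - v) * Mm"
  define L where "L = (c^2 * p + e * v^2) * dt - v * (e + p) * dx"
  have Dn: "Dn \<noteq> 0" using P M cv by (simp add: Dn_def Mm_def)
  have Mx: "p * (c * c) + e * (v * v) \<noteq> 0" "p * c^2 + e * v^2 \<noteq> 0" using M by (auto simp: power2_eq_square)
  have a: "deriv (\<lambda>s. J3 c s v p e dt dx) r = 0" unfolding J3_def by simp
  have hdt: "((\<lambda>s. J3 c r v p e s dx) has_real_derivative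
      (v * (c * p + e * v) / (p * (c - v) * (p * c^2 + e * v^2)) * (c^2 * p + e * v^2))) (at dt)"
    unfolding J3_def using P M cv by (auto intro!: derivative_eq_intros simp: ac_simps)
  have b: "deriv (\<lambda>s. J3 c r v p e s dx) dt = N / Dn * Mm"
  proof -
    have m: "c^2 * p + e * v^2 = Mm" by (simp add: Mm_def mult.commute)
    show ?thesis using DERIV_imp_deriv[OF hdt] unfolding m N_def Dn_def Q_def Mm_def using M by simp
  qed
  have "((\<lambda>s. J3 c r s p e dt dx) has_real_derivative
     (((Q + v * e) * Dn - N * (p * (- Mm + (c - v) * 2 * e * v))) / Dn^2 * L
       + N / Dn * (2 * e * v * dt - (e + p) * dx))) (at v)"
  proof -
    have h1: "((\<lambda>s. s * (c * p + e * s) / (p * (c - s) * (p * c^2 + e * s^2))) has_real_derivative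
      (((Q + v * e) * Dn - N * (p * (- Mm + (c - v) * 2 * e * v))) / Dn^2)) (at v)"
      using Dn cv Mx P
      by (auto intro!: derivative_eq_intros simp: N_def Q_def Dn_def Mm_def field_simps power2_eq_square)
    have h2: "((\<lambda>s. (c^2 * p + e * s^2) * dt - s * (e + p) * dx) has_real_derivative
      (2 * e * v * dt - (e + p) * dx)) (at v)"
      by (auto intro!: derivative_eq_intros simp: algebra_simps)
    have "(\<lambda>s. J3 c r s p e dt dx) = (\<lambda>s. s * (c * p + e * s) / (p * (c - s) * (p * c^2 + e * s^2)) * ((c^2 * p + e * s^2) * dt - s * (e + p) * dx))"
      unfolding J3_def by simp
    moreover have "(((Q + v * e) * Dn - N * (p * (- Mm + (c - v) * 2 * e * v))) / Dn^2) * ((c^2 * p + e * v^2) * dt - v * (e + p) * dx)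
       + (2 * e * v * dt - (e + p) * dx) * (v * (c * p + e * v) / (p * (c - v) * (p * c^2 + e * v^2)))
       = (((Q + v * e) * Dn - N * (p * (- Mm + (c - v) * 2 * e * v))) / Dn^2 * L
       + N / Dn * (2 * e * v * dt - (e + p) * dx))"
      unfolding L_def N_def Dn_def Mm_def Q_def by (simp add: algebra_simps)
    ultimately show ?thesis using DERIV_mult[OF h1 h2] by simp
  qed
  hence dv: "deriv (\<lambda>s. J3 c r s p e dt dx) v = (((Q + v * e) * Dn - N * (p * (- Mm + (c - v) * 2 * e * v))) / Dn^2 * L
       + N / Dn * (2 * e * v * dt - (e + p) * dx))"
    by (rule DERIV_imp_deriv)
  have "((\<lambda>s. J3 c r v s e dt dx) has_real_derivative
     (((v * c) * Dn - N * ((c - v) * Mm + p * (c - v) * c^2)) / Dn^2 * L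
       + N / Dn * (c^2 * dt - v * dx))) (at p)"
  proof -
    have h1: "((\<lambda>s. v * (c * s + e * v) / (s * (c - v) * (s * c^2 + e * v^2))) has_real_derivative (((v * c) * Dn - N * ((c - v) * Mm + p * (c - v) * c^2)) / Dn^2)) (at p)"
      using Dn cv Mx P
      by (auto intro!: derivative_eq_intros simp: N_def Q_def Dn_def Mm_def field_simps power2_eq_square)
    have h2: "((\<lambda>s. (c^2 * s + e * v^2) * dt - v * (e + s) * dx) has_real_derivative (c^2 * dt - v * dx)) (at p)"
      by (auto intro!: derivative_eq_intros simp: algebra_simps)
    have "(\<lambda>s. J3 c r v s e dt dx) = (\<lambda>s. v * (c * s + e * v) / (s * (c - v) * (s * c^2 + e * v^2)) * ((c^2 * s + e * v^2) * dt - v * (e + s) * dx))"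
      unfolding J3_def by simp
    moreover have "(((v * c) * Dn - N * ((c - v) * Mm + p * (c - v) * c^2)) / Dn^2) * ((c^2 * p + e * v^2) * dt - v * (e + p) * dx)
       + (c^2 * dt - v * dx) * (v * (c * p + e * v) / (p * (c - v) * (p * c^2 + e * v^2)))
       = ((v * c) * Dn - N * ((c - v) * Mm + p * (c - v) * c^2)) / Dn^2 * L + N / Dn * (c^2 * dt - v * dx)"
      unfolding L_def N_def Dn_def Mm_def Q_def by (simp add: algebra_simps)
    ultimately show ?thesis using DERIV_mult[OF h1 h2] by simp
  qed
  hence dp: "deriv (\<lambda>s. J3 c r v s e dt dx) p = (((v * c) * Dn - N * ((c - v) * Mm + p * (c - v) * c^2)) / Dn^2 * L
       + N / Dn * (c^2 * dt - v * dx))"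
    by (rule DERIV_imp_deriv)
  have "((\<lambda>s. J3 c r v p s dt dx) has_real_derivative
     (((v^2) * Dn - N * (p * (c - v) * v^2)) / Dn^2 * L
       + N / Dn * (v^2 * dt - v * dx))) (at e)"
  proof -
    have h1: "((\<lambda>s. v * (c * p + s * v) / (p * (c - v) * (p * c^2 + s * v^2))) has_real_derivative (((v^2) * Dn - N * (p * (c - v) * v^2)) / Dn^2)) (at e)"
      using Dn cv Mx P
      by (auto intro!: derivative_eq_intros simp: N_def Q_def Dn_def Mm_def field_simps power2_eq_square)
    have h2: "((\<lambda>s. (c^2 * p + s * v^2) * dt - v * (s + p) * dx) has_real_derivative (v^2 * dt - v * dx)) (at e)"
      by (auto intro!: derivative_eq_intros simp: algebra_simps)
    have "(\<lambda>s. J3 c r v p s dt dx) = (\<lambda>s. v * (c * p + s * v) / (p * (c - v) * (p * c^2 + s * v^2)) * ((c^2 * p + s * v^2) * dt - v * (s + p) * dx))"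
      unfolding J3_def by simp
    moreover have "(((v^2) * Dn - N * (p * (c - v) * v^2)) / Dn^2) * ((c^2 * p + e * v^2) * dt - v * (e + p) * dx)
       + (v^2 * dt - v * dx) * (v * (c * p + e * v) / (p * (c - v) * (p * c^2 + e * v^2)))
       = ((v^2) * Dn - N * (p * (c - v) * v^2)) / Dn^2 * L + N / Dn * (v^2 * dt - v * dx)"
      unfolding L_def N_def Dn_def Mm_def Q_def by (simp add: algebra_simps)
    ultimately show ?thesis using DERIV_mult[OF h1 h2] by simp
  qed
  hence de: "deriv (\<lambda>s. J3 c r v p s dt dx) e = (((v^2) * Dn - N * (p * (c - v) * v^2)) / Dn^2 * L
       + N / Dn * (v^2 * dt - v * dx))"
    by (rule DERIV_imp_deriv)
  define W where "W = c^2 - v^2"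
  have W: "W \<noteq> 0" using cv by (simp add: W_def)
  have Wf: "c^2 - v^2 = W" "(c^2 * p + e * v^2) * dt - v * (e + p) * dx = L" by (simp_all add: W_def L_def)
  have "Xgen c (J3 c) r v p e dt dx * (Dn^2 * W) =
      - p * v * ((((Q + v * e) * Dn - N * (p * (- Mm + (c - v) * 2 * e * v)))) * L * W
        + N * Dn * (2 * e * v * dt - (e + p) * dx) * W)
      - p^2 * ((((v * c) * Dn - N * ((c - v) * Mm + p * (c - v) * c^2))) * L * W
        + N * Dn * (c^2 * dt - v * dx) * W)
      + (c^2 * p^2 - e^2 * v^2) * ((((v^2) * Dn - N * (p * (c - v) * v^2))) * L
        + N * Dn * (v^2 * dt - v * dx))
      + L * N * Dn * Mm"
    unfolding Xgen_def a b dv dp de Wf using Dn W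
    by (simp add: field_simps power2_eq_square)
  also have "... = 0" unfolding N_def Q_def Dn_def Mm_def L_def W_def
    by (simp add: algebra_simps power2_eq_square)
  finally show ?thesis using Dn W by simp
qed

theorem mainTheorem2:
  fixes c \<rho> v p e dt dx :: real
  assumes "c > 0" and "\<bar>v\<bar> < c"
  shows "(c * p + v * e \<noteq> 0 \<longrightarrow> Xgen c (J1 c) \<rho> v p e dt dx = 0)
       \<and> (c * p + e * v \<noteq> 0 \<longrightarrow> Xgen c (J2 c) \<rho> v p e dt dx = 0)
       \<and> (p \<noteq> 0 \<and> p * c^2 + e * v^2 \<noteq> 0 \<longrightarrow> Xgen c (J3 c) \<rho> v p e dt dx = 0)"
  using j1[OF assms] j2[OF assms] j3[OF assms] by blast

end
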